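(* Let $0<\beta<1$. Then the linear operator $T=\beta+2xD+(x^2-1)D^2$ on $\mathbb{R}[x]$, i.e. $T[f](x)=\beta f(x)+2xf'(x)+(x^2-1)f''(x)$, preserves the reality of zeros: whenever $f\in\mathbb{R}[x]$ has only real zeros, $T[f]$ has only real zeros.
   Context: $D$ denotes differentiation with respect to $x$. *)

theory Defs
  imports "HOL-Computational_Algebra.Polynomial"
begin

definition real_rooted :: "real poly \<Rightarrow> bool" where
  "real_rooted f \<longleftrightarrow> (\<forall>z::complex. poly (map_poly complex_of_real f) z = 0 \<longrightarrow> Im z = 0)"

definition T_op :: "real \<Rightarrow> real poly \<Rightarrow> real poly" where
  "T_op \<beta> f = smult \<beta> f + [:0, 2:] * pderiv f + [:-1, 0, 1:] * pderiv (pderiv f)"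

end

theory Submission
  imports Defs "HOL-Computational_Algebra.Fundamental_Theorem_Algebra"
begin

abbreviation cp :: "real poly \<Rightarrow> complex poly" where "cp \<equiv> map_poly complex_of_real"

lemma cp_add: "cp (p + q) = cp p + cp q"
  by (intro poly_eqI) (simp add: coeff_map_poly)

lemma cp_smult: "cp (smult c p) = smult (complex_of_real c) (cp p)"
  by (rule map_poly_smult) auto

lemma cp_pCons: "cp (pCons a p) = pCons (complex_of_real a) (cp p)"
  by (rule map_poly_pCons) auto

lemma cp_mult: "cp (p * q) = cp p * cp q"
  by (induction p) (auto simp: cp_pCons cp_add cp_smult)

lemma cp_pderiv: "cp (pderiv p) = pderiv (cp p)"
  by (intro poly_eqI) (simp add: coeff_map_poly coeff_pderiv)

lemma logderiv_im:
  fixes G :: "complex poly"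
  assumes "G \<noteq> 0" "\<forall>\<zeta>. poly G \<zeta> = 0 \<longrightarrow> Im \<zeta> \<le> 0" "Im w > 0"
  shows "poly G w \<noteq> 0 \<and> Im (poly (pderiv G) w / poly G w) \<le> 0 \<and>
         (degree G > 0 \<longrightarrow> Im (poly (pderiv G) w / poly G w) < 0)"
  using assms
proof (induction "degree G" arbitrary: G rule: less_induct)
  case less
  have nz: "poly G w \<noteq> 0" using less.prems by force
  show ?case
  proof (cases "degree G = 0")
    case True
    then have "pderiv G = 0" using pderiv_eq_0_iff by blast
    then show ?thesis using nz True by simp
  next
    case False
    then obtain \<zeta> where z: "poly G \<zeta> = 0"
      using fundamental_theorem_of_algebra_alt[of G] by fastforce
    then obtain H where H: "G = [:-\<zeta>, 1:] * H" using poly_eq_0_iff_dvd by blast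
    have Hnz: "H \<noteq> 0" using H less.prems(1) by auto
    have "degree G = degree [:-\<zeta>, 1:] + degree H" unfolding H
      by (rule degree_mult_eq) (use Hnz in auto)
    hence dH: "degree G = degree H + 1" by simp
    have Hr: "\<forall>\<zeta>. poly H \<zeta> = 0 \<longrightarrow> Im \<zeta> \<le> 0" using less.prems(2) H by auto
    have IH: "poly H w \<noteq> 0 \<and> Im (poly (pderiv H) w / poly H w) \<le> 0"
      using less.hyps[of H] dH Hnz Hr less.prems(3) by auto
    have wz: "w - \<zeta> \<noteq> 0" using less.prems z by auto
    have eq: "poly (pderiv G) w / poly G w = 1 / (w - \<zeta>) + poly (pderiv H) w / poly H w"
    proof -
      have d: "poly (pderiv G) w = (w - \<zeta>) * poly (pderiv H) w + poly H w"
        unfolding H pderiv_mult by (simp add: pderiv_pCons algebra_simps)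
      have g: "poly G w = (w - \<zeta>) * poly H w" unfolding H by (simp add: algebra_simps)
      show ?thesis unfolding d g using IH wz by (simp add: field_simps)
    qed
    have "Im (1 / (w - \<zeta>)) < 0"
    proof -
      have p: "Im (w - \<zeta>) > 0" using less.prems(2,3) z by force
      have "Im (1 / (w - \<zeta>)) = - Im (w - \<zeta>) / ((Re (w - \<zeta>))\<^sup>2 + (Im (w - \<zeta>))\<^sup>2)"
        by (simp add: Im_divide power2_eq_square)
      moreover have "(Re (w - \<zeta>))\<^sup>2 + (Im (w - \<zeta>))\<^sup>2 > 0" using p
        by (simp add: add_nonneg_pos)
      ultimately show ?thesis using p by (simp add: divide_neg_pos)
    qed
    then show ?thesis using eq IH nz False by simp
  qed
qed

lemma shift_nonzero:
  fixes G :: "complex poly"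
  assumes "G \<noteq> 0" "\<forall>\<zeta>. poly G \<zeta> = 0 \<longrightarrow> Im \<zeta> \<le> 0" "Im w > 0"
    and "Im \<rho> \<ge> 0" "\<rho> \<noteq> 0"
  shows "poly (pderiv G) w - \<rho> * poly G w \<noteq> 0"
proof
  assume eq: "poly (pderiv G) w - \<rho> * poly G w = 0"
  have L: "poly G w \<noteq> 0 \<and> Im (poly (pderiv G) w / poly G w) \<le> 0 \<and>
         (degree G > 0 \<longrightarrow> Im (poly (pderiv G) w / poly G w) < 0)"
    using logderiv_im[OF assms(1-3)] .
  then have r: "poly (pderiv G) w / poly G w = \<rho>" using eq by (simp add: field_simps)
  show False
  proof (cases "degree G = 0")
    case True
    then have "pderiv G = 0" using pderiv_eq_0_iff by blast
    then show False using eq L assms(5) by simp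
  next
    case False
    then show False using L r assms(4) by auto
  qed
qed

lemma sym_roots:
  fixes w :: complex and \<beta> :: real
  assumes "Im w > 0" "0 < \<beta>" "\<beta> \<le> 1"
  shows "\<exists>\<rho>1 \<rho>2. Im \<rho>1 \<ge> 0 \<and> Im \<rho>2 \<ge> 0 \<and> \<rho>1 \<noteq> 0 \<and> \<rho>2 \<noteq> 0 \<and>
     (w\<^sup>2 - 1) * (\<rho>1 + \<rho>2) = - 2 * w \<and> (w\<^sup>2 - 1) * (\<rho>1 * \<rho>2) = complex_of_real \<beta>"
proof -
  define c where "c = complex_of_real (1 - \<beta>) * w\<^sup>2 + complex_of_real \<beta>"
  define R where "R = csqrt c"
  have R2: "R\<^sup>2 = c" unfolding R_def by simp
  define x where "x = Re w"
  define y where "y = Im w"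
  define A where "A = Re R"
  define B where "B = Im R"
  have y0: "y > 0" using assms y_def by simp
  have e1: "A\<^sup>2 - B\<^sup>2 = (1 - \<beta>) * (x\<^sup>2 - y\<^sup>2) + \<beta>"
  proof -
    have "Re (R\<^sup>2) = Re c" using R2 by simp
    then show ?thesis unfolding A_def B_def x_def y_def c_def
      by (simp add: power2_eq_square)
  qed
  have e2: "A * B = (1 - \<beta>) * x * y"
  proof -
    have "Im (R\<^sup>2) = Im c" using R2 by simp
    then show ?thesis unfolding A_def B_def x_def y_def c_def
      by (simp add: power2_eq_square algebra_simps)
  qed
  have Bb: "\<bar>B\<bar> \<le> y"
  proof (rule ccontr)
    assume "\<not> \<bar>B\<bar> \<le> y"
    then have By: "B\<^sup>2 > y\<^sup>2" using y0
      by (metis abs_le_square_iff abs_of_pos linorder_not_le)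
    have Bp: "B\<^sup>2 > 0" using By y0 by (smt (verit) zero_less_power)
    have "A\<^sup>2 * B\<^sup>2 = (1 - \<beta>)\<^sup>2 * x\<^sup>2 * y\<^sup>2" using e2
      by (metis power_mult_distrib)
    also have "\<dots> \<le> (1 - \<beta>)\<^sup>2 * x\<^sup>2 * B\<^sup>2" using By
      by (intro mult_left_mono) auto
    finally have "A\<^sup>2 \<le> (1 - \<beta>)\<^sup>2 * x\<^sup>2" using Bp by simp
    also have "\<dots> \<le> (1 - \<beta>) * x\<^sup>2"
    proof (rule mult_right_mono)
      have "(1 - \<beta>) * (1 - \<beta>) \<le> 1 * (1 - \<beta>)" using assms by (intro mult_right_mono) auto
      then show "(1 - \<beta>)\<^sup>2 \<le> 1 - \<beta>" by (simp add: power2_eq_square)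
    qed simp
    finally have "A\<^sup>2 \<le> (1 - \<beta>) * x\<^sup>2" .
    moreover have "(1 - \<beta>) * y\<^sup>2 \<le> 1 * y\<^sup>2" using assms
      by (intro mult_right_mono) auto
    moreover have "(1 - \<beta>) * (x\<^sup>2 - y\<^sup>2) = (1 - \<beta>) * x\<^sup>2 - (1 - \<beta>) * y\<^sup>2"
      by (simp add: algebra_simps)
    ultimately show False using e1 By assms by linarith
  qed
  define s1 where "s1 = (- w + R) / complex_of_real \<beta>"
  define s2 where "s2 = (- w - R) / complex_of_real \<beta>"
  have bnz: "complex_of_real \<beta> \<noteq> 0" using assms by simp
  have prod: "s1 * s2 = (w\<^sup>2 - 1) / complex_of_real \<beta>"
  proof -
    have "s1 * s2 = (w\<^sup>2 - R\<^sup>2) / (complex_of_real \<beta>)\<^sup>2"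
      unfolding s1_def s2_def by (simp add: field_simps power2_eq_square)
    also have "\<dots> = (w\<^sup>2 - 1) / complex_of_real \<beta>"
      unfolding R2 c_def using bnz by (simp add: field_simps power2_eq_square of_real_diff)
    finally show ?thesis .
  qed
  have sum: "s1 + s2 = - 2 * w / complex_of_real \<beta>"
    unfolding s1_def s2_def by (simp add: add_divide_distrib[symmetric])
  have wq: "w\<^sup>2 - 1 \<noteq> 0"
  proof
    assume "w\<^sup>2 - 1 = 0"
    then have "Im (w\<^sup>2) = 0" "Re (w\<^sup>2) = 1" by (simp_all add: right_minus_eq)
    then show False using y0 unfolding y_def
      by (simp add: power2_eq_square) (smt (verit) mult_nonneg_nonneg zero_le_square)
  qed
  have s1nz: "s1 \<noteq> 0" and s2nz: "s2 \<noteq> 0" using prod wq bnz by auto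
  have Is1: "Im s1 \<le> 0" unfolding s1_def using Bb assms
    by (simp add: Im_divide_of_real B_def y_def divide_nonpos_pos)
  have Is2: "Im s2 \<le> 0" unfolding s2_def using Bb assms
    by (simp add: Im_divide_of_real B_def y_def divide_nonpos_pos)
  have Iinv: "Im (1 / s) \<ge> 0" if "Im s \<le> 0" for s :: complex
    using that by (simp add: Im_divide divide_nonpos_nonneg)
  show ?thesis
  proof (intro exI conjI)
    show "Im (1 / s1) \<ge> 0" using Iinv Is1 .
    show "Im (1 / s2) \<ge> 0" using Iinv Is2 .
    show "1 / s1 \<noteq> 0" "1 / s2 \<noteq> 0" using s1nz s2nz by auto
    have "w\<^sup>2 - 1 = complex_of_real \<beta> * (s1 * s2)" using prod bnz by simp
    then show "(w\<^sup>2 - 1) * (1 / s1 + 1 / s2) = - 2 * w"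
      using sum s1nz s2nz bnz by (simp add: field_simps)
    show "(w\<^sup>2 - 1) * (1 / s1 * (1 / s2)) = complex_of_real \<beta>"
      using \<open>w\<^sup>2 - 1 = complex_of_real \<beta> * (s1 * s2)\<close> s1nz s2nz by simp
  qed
qed

lemma T_eval:
  "poly (cp (T_op \<beta> f)) w = complex_of_real \<beta> * poly (cp f) w + 2 * w * poly (pderiv (cp f)) w
     + (w\<^sup>2 - 1) * poly (pderiv (pderiv (cp f))) w"
  unfolding T_op_def cp_add cp_smult cp_mult cp_pderiv cp_pCons map_poly_0
  by (simp add: power2_eq_square algebra_simps)

lemma T_upper:
  fixes \<beta> :: real and f :: "real poly"
  assumes "0 < \<beta>" "\<beta> \<le> 1" "real_rooted f" "Im w > 0"
  shows "poly (cp (T_op \<beta> f)) w \<noteq> 0"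
proof -
  define F where "F = cp f"
  have Fr: "\<forall>\<zeta>. poly F \<zeta> = 0 \<longrightarrow> Im \<zeta> \<le> 0"
    using assms(3) unfolding real_rooted_def F_def by auto
  have Fnz: "F \<noteq> 0"
  proof
    assume "F = 0"
    then have "poly F \<i> = 0" by simp
    then show False using assms(3) unfolding real_rooted_def F_def by force
  qed
  obtain \<rho>1 \<rho>2 where r: "Im \<rho>1 \<ge> 0" "Im \<rho>2 \<ge> 0" "\<rho>1 \<noteq> 0" "\<rho>2 \<noteq> 0"
    "(w\<^sup>2 - 1) * (\<rho>1 + \<rho>2) = - 2 * w" "(w\<^sup>2 - 1) * (\<rho>1 * \<rho>2) = complex_of_real \<beta>"
    using sym_roots[OF assms(4,1,2)] by blast
  define g where "g = pderiv F - smult \<rho>2 F"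
  have gr: "\<forall>\<zeta>. poly g \<zeta> = 0 \<longrightarrow> Im \<zeta> \<le> 0"
  proof (intro allI impI)
    fix \<zeta> assume "poly g \<zeta> = 0"
    then have "poly (pderiv F) \<zeta> - \<rho>2 * poly F \<zeta> = 0" unfolding g_def by simp
    then show "Im \<zeta> \<le> 0" using shift_nonzero[OF Fnz Fr _ r(2) r(4)] by force
  qed
  have gnz: "g \<noteq> 0"
  proof
    assume "g = 0"
    then have "poly (pderiv F) \<i> - \<rho>2 * poly F \<i> = 0" unfolding g_def by simp
    then show False using shift_nonzero[OF Fnz Fr _ r(2) r(4), of \<i>] by simp
  qed
  have nz: "poly (pderiv g) w - \<rho>1 * poly g w \<noteq> 0"
    using shift_nonzero[OF gnz gr assms(4) r(1) r(3)] .
  have wq: "w\<^sup>2 - 1 \<noteq> 0"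
    using r(6) assms(1) by auto
  have "poly (cp (T_op \<beta> f)) w = (w\<^sup>2 - 1) * (poly (pderiv g) w - \<rho>1 * poly g w)"
  proof -
    have "(w\<^sup>2 - 1) * (poly (pderiv g) w - \<rho>1 * poly g w)
      = (w\<^sup>2 - 1) * poly (pderiv (pderiv F)) w - ((w\<^sup>2 - 1) * (\<rho>1 + \<rho>2)) * poly (pderiv F) w
        + ((w\<^sup>2 - 1) * (\<rho>1 * \<rho>2)) * poly F w"
      unfolding g_def by (simp add: pderiv_diff pderiv_smult algebra_simps)
    also have "\<dots> = complex_of_real \<beta> * poly F w + 2 * w * poly (pderiv F) w
     + (w\<^sup>2 - 1) * poly (pderiv (pderiv F)) w" unfolding r(5) r(6) by simp
    finally show ?thesis unfolding T_eval F_def by simp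
  qed
  then show ?thesis using wq nz by simp
qed

theorem proposition4p8:
  fixes \<beta> :: real and f :: "real poly"
  assumes "0 < \<beta>" and "\<beta> < 1"
    and "real_rooted f"
  shows "real_rooted (T_op \<beta> f)"
  unfolding real_rooted_def
proof (intro allI impI)
  fix z assume z: "poly (cp (T_op \<beta> f)) z = 0"
  show "Im z = 0"
  proof (rule ccontr)
    assume "Im z \<noteq> 0"
    then consider "Im z > 0" | "Im (cnj z) > 0" by (cases "Im z > 0") auto
    then show False
    proof cases
      case 1
      then show False using T_upper[OF assms(1) _ assms(3)] assms(2) z by auto
    next
      case 2
      have "poly (cp (T_op \<beta> f)) (cnj z) = 0"
        using z by (subst real_poly_cnj_root_iff) (auto simp: coeff_map_poly)
      then show False using T_upper[OF assms(1) _ assms(3) 2] assms(2) by auto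
    qed
  qed
qed

end
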